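(* Let $H(q,p,t)$, $q,p\in\mathbb{R}^n$, be of class $C^3$ and consider $\dot q_i=\partial H/\partial p_i$, $\dot p_i=-\partial H/\partial q_i$. Fix $h>0$, $t_0$ and $a\in\mathbb{R}$. Given $(\alpha,\beta)\in\mathbb{R}^{2n}$ define $(q,p)$ and then $(Q,P)$ by $$q_i=\alpha_i+\tfrac h2\frac{\partial H}{\partial p_i}(q,\beta,t_0+ah),\qquad p_i=\beta_i-\tfrac h2\frac{\partial H}{\partial q_i}(q,\beta,t_0+ah),$$ $$P_i=p_i-\tfrac h2\frac{\partial H}{\partial q_i}(q,P,t_0+(1-a)h),\qquad Q_i=q_i+\tfrac h2\frac{\partial H}{\partial p_i}(q,P,t_0+(1-a)h),$$ where the equations for $q$ and for $P$ are implicit. (i) On any open set where these implicit equations define $q$ and $P$ as $C^1$ functions, the map $(\alpha,\beta)\mapsto(Q,P)$ is a contact (canonical) transformation: $\sum_i dP_i\wedge dQ_i=\sum_i d\beta_i\wedge d\alpha_i$. (ii) Taking for small $h$ the solutions of the implicit equations near $\alpha$ and $\beta$, and letting $(q(t),p(t))$ be the exact solution with $q(t_0)=\alpha$, $p(t_0)=\beta$, one has $Q-q(t_0+h)=O(h^3)$ and $P-p(t_0+h)=O(h^3)$; i.e. the method is of second order. *)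

theory Defs
  imports "HOL-Analysis.Analysis"
begin

definition C1_on :: "'a::real_normed_vector set \<Rightarrow> ('a \<Rightarrow> 'b::real_normed_vector) \<Rightarrow> bool" where
  "C1_on S f \<longleftrightarrow> (\<exists>f'. (\<forall>x\<in>S. (f has_derivative blinfun_apply (f' x)) (at x)) \<and> continuous_on S f')"

definition C2_on :: "'a::real_normed_vector set \<Rightarrow> ('a \<Rightarrow> 'b::real_normed_vector) \<Rightarrow> bool" where
  "C2_on S f \<longleftrightarrow> (\<exists>f'. (\<forall>x\<in>S. (f has_derivative blinfun_apply (f' x)) (at x)) \<and> C1_on S f')"

definition C3_on :: "'a::real_normed_vector set \<Rightarrow> ('a \<Rightarrow> 'b::real_normed_vector) \<Rightarrow> bool" where
  "C3_on S f \<longleftrightarrow> (\<exists>f'. (\<forall>x\<in>S. (f has_derivative blinfun_apply (f' x)) (at x)) \<and> C2_on S f')"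

definition dHq :: "(real^'n \<Rightarrow> real^'n \<Rightarrow> real \<Rightarrow> real) \<Rightarrow> real^'n \<Rightarrow> real^'n \<Rightarrow> real \<Rightarrow> real^'n" where
  "dHq H q p t = (\<chi> i. deriv (\<lambda>s. H (q + s *\<^sub>R axis i 1) p t) 0)"

definition dHp :: "(real^'n \<Rightarrow> real^'n \<Rightarrow> real \<Rightarrow> real) \<Rightarrow> real^'n \<Rightarrow> real^'n \<Rightarrow> real \<Rightarrow> real^'n" where
  "dHp H q p t = (\<chi> i. deriv (\<lambda>s. H q (p + s *\<^sub>R axis i 1) t) 0)"

text \<open>The 2-form \<Sum>_i dy_i \<and> dx_i on pairs (x,y), evaluated on tangent vectors u, v.\<close>

definition omega2 :: "(real^'n) \<times> (real^'n) \<Rightarrow> (real^'n) \<times> (real^'n) \<Rightarrow> real" where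
  "omega2 u v = (\<Sum>i\<in>UNIV. snd u $ i * fst v $ i - snd v $ i * fst u $ i)"

definition canonical_on :: "((real^'n) \<times> (real^'n)) set \<Rightarrow> ((real^'n) \<times> (real^'n) \<Rightarrow> (real^'n) \<times> (real^'n)) \<Rightarrow> bool" where
  "canonical_on U \<Phi> \<longleftrightarrow> (\<forall>z\<in>U. \<exists>D. (\<Phi> has_derivative D) (at z) \<and>
      (\<forall>u v. omega2 (D u) (D v) = omega2 u v))"

definition q_eq where
  "q_eq H h t0 a \<alpha> \<beta> q \<longleftrightarrow> q = \<alpha> + (h/2) *\<^sub>R dHp H q \<beta> (t0 + a*h)"

definition p_of where
  "p_of H h t0 a \<beta> q = \<beta> - (h/2) *\<^sub>R dHq H q \<beta> (t0 + a*h)"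

definition P_eq where
  "P_eq H h t0 a \<beta> q P \<longleftrightarrow> P = p_of H h t0 a \<beta> q - (h/2) *\<^sub>R dHq H q P (t0 + (1-a)*h)"

definition Q_of where
  "Q_of H h t0 a q P = q + (h/2) *\<^sub>R dHp H q P (t0 + (1-a)*h)"

end

theory Submission
  imports Defs
begin

type_synonym 'n E = "(real^'n) \<times> (real^'n) \<times> real"

definition Hpv :: "('n::finite E) \<Rightarrow>\<^sub>L real \<Rightarrow> real^'n" where
  "Hpv A = (\<chi> i. blinfun_apply A (0, axis i 1, 0))"
definition Hqv :: "('n::finite E) \<Rightarrow>\<^sub>L real \<Rightarrow> real^'n" where
  "Hqv A = (\<chi> i. blinfun_apply A (axis i 1, 0, 0))"

lemma bl_scale_mid: "blinfun_apply A (0, s *\<^sub>R v, 0) = s * blinfun_apply A (0, v, 0)"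
proof -
  have "(0, s *\<^sub>R v, 0) = s *\<^sub>R (0, v, 0)" by simp
  then show ?thesis by (metis blinfun.scaleR_right real_scaleR_def)
qed
lemma bl_scale_fst: "blinfun_apply A (s *\<^sub>R v, 0, 0) = s * blinfun_apply A (v, 0, 0)"
proof -
  have "(s *\<^sub>R v, 0, 0) = s *\<^sub>R (v, 0, 0)" by simp
  then show ?thesis by (metis blinfun.scaleR_right real_scaleR_def)
qed

lemma Hpv_add: "Hpv (A + B) = Hpv A + Hpv B"
  by (simp add: Hpv_def vec_eq_iff blinfun.add_left)
lemma Hqv_add: "Hqv (A + B) = Hqv A + Hqv B"
  by (simp add: Hqv_def vec_eq_iff blinfun.add_left)
lemma Hpv_scale: "Hpv (c *\<^sub>R A) = c *\<^sub>R Hpv A"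
  by (simp add: Hpv_def vec_eq_iff scaleR_blinfun.rep_eq)
lemma Hqv_scale: "Hqv (c *\<^sub>R A) = c *\<^sub>R Hqv A"
  by (simp add: Hqv_def vec_eq_iff scaleR_blinfun.rep_eq)


lemma Hpv_norm: "norm (Hpv A) \<le> norm A * CARD('n)" for A :: "('n::finite E) \<Rightarrow>\<^sub>L real"
proof -
  have "norm (Hpv A) \<le> (\<Sum>i\<in>(UNIV::'n set). \<bar>Hpv A $ i\<bar>)" by (rule norm_le_l1_cart)
  also have "\<dots> \<le> (\<Sum>i\<in>(UNIV::'n set). norm A)"
  proof (rule sum_mono)
    fix i :: 'n
    have "\<bar>Hpv A $ i\<bar> = norm (blinfun_apply A (0, axis i 1, 0))" by (simp add: Hpv_def)
    also have "\<dots> \<le> norm A * norm ((0::real^'n), axis i (1::real), (0::real))" by (rule norm_blinfun)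
    also have "norm ((0::real^'n), axis i (1::real), (0::real)) = 1"
      by (simp add: norm_Pair)
    finally show "\<bar>Hpv A $ i\<bar> \<le> norm A" by simp
  qed
  finally show ?thesis by (simp add: mult.commute)
qed

lemma Hqv_norm: "norm (Hqv A) \<le> norm A * CARD('n)" for A :: "('n::finite E) \<Rightarrow>\<^sub>L real"
proof -
  have "norm (Hqv A) \<le> (\<Sum>i\<in>(UNIV::'n set). \<bar>Hqv A $ i\<bar>)" by (rule norm_le_l1_cart)
  also have "\<dots> \<le> (\<Sum>i\<in>(UNIV::'n set). norm A)"
  proof (rule sum_mono)
    fix i :: 'n
    have "\<bar>Hqv A $ i\<bar> = norm (blinfun_apply A (axis i 1, 0, 0))" by (simp add: Hqv_def)
    also have "\<dots> \<le> norm A * norm (axis i (1::real), (0::real^'n), (0::real))" by (rule norm_blinfun)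
    also have "norm (axis i (1::real), (0::real^'n), (0::real)) = 1"
      by (simp add: norm_Pair)
    finally show "\<bar>Hqv A $ i\<bar> \<le> norm A" by simp
  qed
  finally show ?thesis by (simp add: mult.commute)
qed

lemma bl_Hpv: "bounded_linear (Hpv :: ('n::finite E) \<Rightarrow>\<^sub>L real \<Rightarrow> real^'n)"
  by (rule bounded_linear_intro[where K="real CARD('n)"]) (auto simp: Hpv_add Hpv_scale Hpv_norm)
lemma bl_Hqv: "bounded_linear (Hqv :: ('n::finite E) \<Rightarrow>\<^sub>L real \<Rightarrow> real^'n)"
  by (rule bounded_linear_intro[where K="real CARD('n)"]) (auto simp: Hqv_add Hqv_scale Hqv_norm)

lemma inner_Hpv: "Hpv A \<bullet> y = blinfun_apply A (0, y, 0)"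
proof -
  have "Hpv A \<bullet> y = (\<Sum>i\<in>UNIV. y $ i * blinfun_apply A (0, axis i 1, 0))"
    by (simp add: inner_vec_def Hpv_def mult.commute)
  also have "\<dots> = (\<Sum>i\<in>UNIV. blinfun_apply A (y $ i *\<^sub>R (0, axis i 1, 0)))"
    by (simp add: bl_scale_mid bl_scale_fst)
  also have "\<dots> = blinfun_apply A (\<Sum>i\<in>UNIV. y $ i *\<^sub>R (0, axis i 1, 0))"
    by (simp add: blinfun.sum_right)
  also have "(\<Sum>i\<in>UNIV. y $ i *\<^sub>R ((0::real^'a), axis i (1::real), (0::real))) = (0, y, 0)"
  proof -
    have "(\<Sum>i\<in>UNIV. y $ i *\<^sub>R ((0::real^'a), axis i (1::real), (0::real)))
        = (0, (\<Sum>i\<in>UNIV. y $ i *\<^sub>R axis i (1::real)), 0)"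
      by (simp add: sum_prod)
    also have "(\<Sum>i\<in>UNIV. y $ i *\<^sub>R axis i (1::real)) = y"
      using basis_expansion[of y] by (simp add: scalar_mult_eq_scaleR)
    finally show ?thesis .
  qed
  finally show ?thesis .
qed

lemma inner_Hqv: "Hqv A \<bullet> y = blinfun_apply A (y, 0, 0)"
proof -
  have "Hqv A \<bullet> y = (\<Sum>i\<in>UNIV. y $ i * blinfun_apply A (axis i 1, 0, 0))"
    by (simp add: inner_vec_def Hqv_def mult.commute)
  also have "\<dots> = (\<Sum>i\<in>UNIV. blinfun_apply A (y $ i *\<^sub>R (axis i 1, 0, 0)))"
    by (simp add: bl_scale_mid bl_scale_fst)
  also have "\<dots> = blinfun_apply A (\<Sum>i\<in>UNIV. y $ i *\<^sub>R (axis i 1, 0, 0))"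
    by (simp add: blinfun.sum_right)
  also have "(\<Sum>i\<in>UNIV. y $ i *\<^sub>R (axis i (1::real), (0::real^'a), (0::real))) = (y, 0, 0)"
  proof -
    have "(\<Sum>i\<in>UNIV. y $ i *\<^sub>R (axis i (1::real), (0::real^'a), (0::real)))
        = ((\<Sum>i\<in>UNIV. y $ i *\<^sub>R axis i (1::real)), 0, 0)"
      by (simp add: sum_prod)
    also have "(\<Sum>i\<in>UNIV. y $ i *\<^sub>R axis i (1::real)) = y"
      using basis_expansion[of y] by (simp add: scalar_mult_eq_scaleR)
    finally show ?thesis .
  qed
  finally show ?thesis .
qed

lemma dHp_eq:
  assumes "\<And>x. ((\<lambda>(q, p, t). H q p t) has_derivative blinfun_apply (H' x)) (at x)"
  shows "dHp H q p t = Hpv (H' (q, p, t))"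
proof -
  have "deriv (\<lambda>s. H q (p + s *\<^sub>R axis i 1) t) 0 = blinfun_apply (H' (q,p,t)) (0, axis i 1, 0)" for i
  proof -
    have d: "((\<lambda>s. (q, p + s *\<^sub>R axis i 1, t)) has_derivative (\<lambda>s. (0, s *\<^sub>R axis i 1, 0))) (at 0)"
      by (auto intro!: derivative_eq_intros simp: zero_prod_def)
    have dd: "((\<lambda>s. (\<lambda>(q, p, t). H q p t) (q, p + s *\<^sub>R axis i 1, t)) has_derivative
          (\<lambda>s. blinfun_apply (H' (q,p,t)) (0, s *\<^sub>R axis i 1, 0))) (at 0)"
      using has_derivative_compose[OF d assms[of "(q, p + 0 *\<^sub>R axis i 1, t)"]] by (simp add: o_def)
    have eq: "(\<lambda>s. blinfun_apply (H' (q,p,t)) (0, s *\<^sub>R axis i 1, 0)) = (*) (blinfun_apply (H' (q,p,t)) (0, axis i 1, 0))"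
      by (rule ext) (simp add: bl_scale_mid)
    have "((\<lambda>s. H q (p + s *\<^sub>R axis i 1) t) has_field_derivative
          blinfun_apply (H' (q,p,t)) (0, axis i 1, 0)) (at 0)"
      using dd unfolding eq has_field_derivative_def by simp
    then show ?thesis by (rule DERIV_imp_deriv)
  qed
  then show ?thesis by (simp add: dHp_def Hpv_def)
qed

lemma dHq_eq:
  assumes "\<And>x. ((\<lambda>(q, p, t). H q p t) has_derivative blinfun_apply (H' x)) (at x)"
  shows "dHq H q p t = Hqv (H' (q, p, t))"
proof -
  have "deriv (\<lambda>s. H (q + s *\<^sub>R axis i 1) p t) 0 = blinfun_apply (H' (q,p,t)) (axis i 1, 0, 0)" for i
  proof -
    have d: "((\<lambda>s. (q + s *\<^sub>R axis i 1, p, t)) has_derivative (\<lambda>s. (s *\<^sub>R axis i 1, 0, 0))) (at 0)"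
      by (auto intro!: derivative_eq_intros simp: zero_prod_def)
    have dd: "((\<lambda>s. (\<lambda>(q, p, t). H q p t) (q + s *\<^sub>R axis i 1, p, t)) has_derivative
          (\<lambda>s. blinfun_apply (H' (q,p,t)) (s *\<^sub>R axis i 1, 0, 0))) (at 0)"
      using has_derivative_compose[OF d assms[of "(q + 0 *\<^sub>R axis i 1, p, t)"]] by (simp add: o_def)
    have eq: "(\<lambda>s. blinfun_apply (H' (q,p,t)) (s *\<^sub>R axis i 1, 0, 0)) = (*) (blinfun_apply (H' (q,p,t)) (axis i 1, 0, 0))"
      by (rule ext) (simp add: bl_scale_fst)
    have "((\<lambda>s. H (q + s *\<^sub>R axis i 1) p t) has_field_derivative
          blinfun_apply (H' (q,p,t)) (axis i 1, 0, 0)) (at 0)"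
      using dd unfolding eq has_field_derivative_def by simp
    then show ?thesis by (rule DERIV_imp_deriv)
  qed
  then show ?thesis by (simp add: dHq_def Hqv_def)
qed

lemma onorm_blinfun_diff: "onorm (blinfun_apply A - blinfun_apply B) = norm (A - B)"
proof -
  have "blinfun_apply A - blinfun_apply B = blinfun_apply (A - B)"
    by (simp add: minus_blinfun.rep_eq fun_diff_def)
  then show ?thesis by (simp add: norm_blinfun.rep_eq)
qed

lemma linearization_ball:
  fixes g :: "'a::real_normed_vector \<Rightarrow> 'b::real_normed_vector"
  assumes "convex S" "a \<in> S" "b \<in> S" "x0 \<in> S"
    and d: "\<And>y. y \<in> S \<Longrightarrow> (g has_derivative g' y) (at y)"
    and B: "\<And>y. y \<in> S \<Longrightarrow> onorm (g' y - g' x0) \<le> B"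
  shows "norm (g b - g a - g' x0 (b - a)) \<le> norm (b - a) * B"
proof (rule differentiable_bound_linearization[where S=S and f'=g'])
  show "a + t *\<^sub>R (b - a) \<in> S" if "t \<in> {0..1}" for t
  proof -
    have "a + t *\<^sub>R (b - a) = (1 - t) *\<^sub>R a + t *\<^sub>R b" by (simp add: algebra_simps)
    then show ?thesis using assms(1-3) that by (simp add: convex_def)
  qed
  show "(g has_derivative g' x) (at x within S)" if "x \<in> S" for x
    using d[OF that] by (rule has_derivative_at_withinI)
qed (use assms in auto)

lemma shift_deriv:
  assumes d1: "\<And>x. (f has_derivative blinfun_apply (f' x)) (at x)"
  shows "((\<lambda>w. f (w + c)) has_derivative blinfun_apply (f' (w + c))) (at w)"
proof -
  have "((\<lambda>w. w + c) has_derivative (\<lambda>h. h)) (at w)" by (auto intro!: derivative_eq_intros)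
  from has_derivative_compose[OF this d1] show ?thesis by simp
qed

lemma second_deriv_sym:
  fixes f :: "'a::real_normed_vector \<Rightarrow> real"
  assumes d1: "\<And>x. (f has_derivative blinfun_apply (f' x)) (at x)"
    and d2: "\<And>x. (f' has_derivative blinfun_apply (f'' x)) (at x)"
    and c: "continuous (at x) f''"
  shows "blinfun_apply (blinfun_apply (f'' x) u) v = blinfun_apply (blinfun_apply (f'' x) v) u"
proof -
  have key: "\<bar>blinfun_apply (blinfun_apply (f'' x) u) v - blinfun_apply (blinfun_apply (f'' x) v) u\<bar>
        \<le> 6 * norm u * norm v * e" if e: "e > 0" for e
  proof -
    obtain d where d: "d > 0" and dd: "\<And>y. dist y x < d \<Longrightarrow> dist (f'' y) (f'' x) < e"
      using c e unfolding continuous_at_eps_delta by blast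
    define s where "s = d / (2 * (norm u + norm v + 1))"
    have den: "2 * (norm u + norm v + 1) > (0::real)" by (smt (verit) norm_ge_zero)
    have s0: "s > 0" using d den unfolding s_def by (rule divide_pos_pos)
    have su: "s * norm u < d / 2" and sv: "s * norm v < d / 2"
    proof -
      have X: "norm u + norm v + 1 \<noteq> (0::real)" by (smt (verit) norm_ge_zero)
      have "s * (norm u + norm v + 1) = d / 2"
        unfolding s_def using X by (simp add: field_simps)
      then show "s * norm u < d / 2" "s * norm v < d / 2"
        using s0 by (simp_all add: algebra_simps) (smt (verit, best) mult_nonneg_nonneg norm_ge_zero s0)+
    qed
    have L: "norm (f' b - f' a - blinfun_apply (f'' x) (b - a)) \<le> norm (b - a) * e"
      if "a \<in> ball x d" "b \<in> ball x d" for a b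
    proof (rule linearization_ball[where S="ball x d" and g'="\<lambda>y. blinfun_apply (f'' y)"])
      show "onorm (blinfun_apply (f'' y) - blinfun_apply (f'' x)) \<le> e" if "y \<in> ball x d" for y
        using dd[of y] that by (simp add: onorm_blinfun_diff dist_norm norm_minus_commute)
    qed (use that d d2 in auto)
    have Q: "\<bar>(f (x + s *\<^sub>R p + s *\<^sub>R r) - f (x + s *\<^sub>R p) - f (x + s *\<^sub>R r) + f x)
              - s^2 * blinfun_apply (blinfun_apply (f'' x) r) p\<bar> \<le> 3 * s^2 * norm p * norm r * e"
      if sp: "s * norm p < d / 2" and sr: "s * norm r < d / 2" for p r
    proof -
      define g where "g w = f (w + s *\<^sub>R r) - f w" for w
      define g' where "g' w = blinfun_apply (f' (w + s *\<^sub>R r) - f' w)" for w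
      have gd: "(g has_derivative g' w) (at w)" for w
        unfolding g_def g'_def minus_blinfun.rep_eq
        by (intro has_derivative_diff shift_deriv d1)
      have inb: "w + s *\<^sub>R r \<in> ball x d" "w \<in> ball x d" if "w \<in> ball x (d/2)" for w
      proof -
        have "norm (s *\<^sub>R r) = s * norm r" using s0 by simp
        moreover have "dist x (w + s *\<^sub>R r) \<le> dist x w + dist w (w + s *\<^sub>R r)" by (rule dist_triangle)
        moreover have "dist w (w + s *\<^sub>R r) = norm (s *\<^sub>R r)" by (simp add: dist_norm)
        moreover have "dist x w < d/2" using that by simp
        ultimately show "w + s *\<^sub>R r \<in> ball x d" using sr s0 by (simp add: abs_of_pos)
        show "w \<in> ball x d" using that d by simp
      qed
      have x_in: "x \<in> ball x (d/2)" using d by simp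
      have xp_in: "x + s *\<^sub>R p \<in> ball x (d/2)" using sp s0 by (simp add: dist_norm)
      have gbound: "onorm (g' w - g' x) \<le> 2 * (s * norm r) * e" if "w \<in> ball x (d/2)" for w
      proof -
        have "g' w - g' x = blinfun_apply ((f' (w + s *\<^sub>R r) - f' w - blinfun_apply (f'' x) (s *\<^sub>R r))
                - (f' (x + s *\<^sub>R r) - f' x - blinfun_apply (f'' x) (s *\<^sub>R r)))"
          unfolding g'_def by (simp add: minus_blinfun.rep_eq fun_diff_def fun_eq_iff)
        then have "onorm (g' w - g' x) = norm ((f' (w + s *\<^sub>R r) - f' w - blinfun_apply (f'' x) (s *\<^sub>R r))
                - (f' (x + s *\<^sub>R r) - f' x - blinfun_apply (f'' x) (s *\<^sub>R r)))"
          by (simp add: norm_blinfun.rep_eq)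
        also have "\<dots> \<le> norm (f' (w + s *\<^sub>R r) - f' w - blinfun_apply (f'' x) (s *\<^sub>R r))
                + norm (f' (x + s *\<^sub>R r) - f' x - blinfun_apply (f'' x) (s *\<^sub>R r))"
          by (rule norm_triangle_ineq4)
        also have "\<dots> \<le> norm (s *\<^sub>R r) * e + norm (s *\<^sub>R r) * e"
          using L[of w "w + s *\<^sub>R r"] L[of x "x + s *\<^sub>R r"] inb[OF that] inb[OF x_in]
          by (intro add_mono) simp_all
        finally show ?thesis using s0 by (simp add: algebra_simps)
      qed
      have G0: "norm (g (x + s *\<^sub>R p) - g x - g' x ((x + s *\<^sub>R p) - x)) \<le> norm ((x + s *\<^sub>R p) - x) * (2 * (s * norm r) * e)"
        by (rule linearization_ball[where S="ball x (d/2)"]) (use x_in xp_in gd gbound in auto)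
      then have G: "norm (g (x + s *\<^sub>R p) - g x - g' x (s *\<^sub>R p)) \<le> norm (s *\<^sub>R p) * (2 * (s * norm r) * e)"
        by simp
      have L2: "norm (f' (x + s *\<^sub>R r) - f' x - blinfun_apply (f'' x) (s *\<^sub>R r)) \<le> norm (s *\<^sub>R r) * e"
        using L[of x "x + s *\<^sub>R r"] inb[OF x_in] by simp
      have "\<bar>g' x (s *\<^sub>R p) - blinfun_apply (blinfun_apply (f'' x) (s *\<^sub>R r)) (s *\<^sub>R p)\<bar>
          = norm (blinfun_apply (f' (x + s *\<^sub>R r) - f' x - blinfun_apply (f'' x) (s *\<^sub>R r)) (s *\<^sub>R p))"
        unfolding g'_def by (simp add: minus_blinfun.rep_eq)
      also have "\<dots> \<le> norm (f' (x + s *\<^sub>R r) - f' x - blinfun_apply (f'' x) (s *\<^sub>R r)) * norm (s *\<^sub>R p)"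
        by (rule norm_blinfun)
      also have "\<dots> \<le> norm (s *\<^sub>R r) * e * norm (s *\<^sub>R p)"
        by (rule mult_right_mono[OF L2]) simp
      finally have H: "\<bar>g' x (s *\<^sub>R p) - blinfun_apply (blinfun_apply (f'' x) (s *\<^sub>R r)) (s *\<^sub>R p)\<bar>
          \<le> norm (s *\<^sub>R r) * e * norm (s *\<^sub>R p)" .
      have eq1: "g (x + s *\<^sub>R p) - g x = f (x + s *\<^sub>R p + s *\<^sub>R r) - f (x + s *\<^sub>R p) - f (x + s *\<^sub>R r) + f x"
        unfolding g_def by simp
      have eq2: "blinfun_apply (blinfun_apply (f'' x) (s *\<^sub>R r)) (s *\<^sub>R p) = s^2 * blinfun_apply (blinfun_apply (f'' x) r) p"
        by (simp add: blinfun.scaleR_right blinfun.scaleR_left power2_eq_square scaleR_blinfun.rep_eq)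
      have ns: "norm (s *\<^sub>R p) = s * norm p" "norm (s *\<^sub>R r) = s * norm r" using s0 by simp_all
      from G H have "\<bar>(g (x + s *\<^sub>R p) - g x) - blinfun_apply (blinfun_apply (f'' x) (s *\<^sub>R r)) (s *\<^sub>R p)\<bar>
          \<le> norm (s *\<^sub>R p) * (2 * (s * norm r) * e) + norm (s *\<^sub>R r) * e * norm (s *\<^sub>R p)"
        by (simp only: real_norm_def)
      then show ?thesis unfolding eq1 eq2 ns by (simp add: power2_eq_square algebra_simps)
    qed
    have comm: "x + s *\<^sub>R v + s *\<^sub>R u = x + s *\<^sub>R u + s *\<^sub>R v" by (simp add: algebra_simps)
    define A where "A = blinfun_apply (blinfun_apply (f'' x) u) v"
    define B where "B = blinfun_apply (blinfun_apply (f'' x) v) u"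
    define W where "W = f (x + s *\<^sub>R u + s *\<^sub>R v) - f (x + s *\<^sub>R u) - f (x + s *\<^sub>R v) + f x"
    define K where "K = 3 * s\<^sup>2 * norm u * norm v * e"
    have e1: "\<bar>W - s^2 * B\<bar> \<le> K" using Q[OF su sv] unfolding W_def B_def K_def .
    have e2: "\<bar>W - s^2 * A\<bar> \<le> K" using Q[OF sv su] unfolding W_def A_def K_def comm
      by (simp add: mult_ac)
    have "\<bar>s^2 * A - s^2 * B\<bar> \<le> 2 * K" using e1 e2 by (simp add: abs_le_iff)
    then have "s^2 * \<bar>A - B\<bar> \<le> s^2 * (6 * norm u * norm v * e)"
      by (simp add: abs_mult right_diff_distrib[symmetric] K_def)
    then have "s^2 * \<bar>blinfun_apply (blinfun_apply (f'' x) u) v - blinfun_apply (blinfun_apply (f'' x) v) u\<bar>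
        \<le> s^2 * (6 * norm u * norm v * e)" unfolding A_def B_def .
    then show ?thesis using s0 by simp
  qed
  have "\<bar>blinfun_apply (blinfun_apply (f'' x) u) v - blinfun_apply (blinfun_apply (f'' x) v) u\<bar> \<le> 0" (is "?D \<le> 0")
  proof (rule field_le_epsilon)
    fix e :: real assume "e > 0"
    have den: "6 * norm u * norm v + 1 > (0::real)"
      by (smt (verit) mult_nonneg_nonneg norm_ge_zero)
    with \<open>e > 0\<close> have "e / (6 * norm u * norm v + 1) > 0" by simp
    from key[OF this] have "?D \<le> 6 * norm u * norm v * (e / (6 * norm u * norm v + 1))" .
    also have "\<dots> \<le> e" using \<open>e > 0\<close> den by (simp add: field_simps)
    finally show "?D \<le> 0 + e" by simp
  qed
  then show ?thesis by simp
qed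

lemma bl_split: "blinfun_apply S (x, y, 0) = blinfun_apply S (x, 0, 0) + blinfun_apply S (0, y, 0)"
  for S :: "('n::finite E) \<Rightarrow>\<^sub>L real"
proof -
  have "(x, y, 0::real) = (x, 0, 0) + (0, y, 0)" by simp
  then show ?thesis by (metis blinfun.add_right)
qed

lemma symp_alg:
  fixes S1 S2 :: "('n::finite E) \<Rightarrow>\<^sub>L (('n::finite E) \<Rightarrow>\<^sub>L real)" and c :: real
  assumes sym1: "\<And>w v. blinfun_apply (blinfun_apply S1 w) v = blinfun_apply (blinfun_apply S1 v) w"
    and sym2: "\<And>w v. blinfun_apply (blinfun_apply S2 w) v = blinfun_apply (blinfun_apply S2 v) w"
    and hqu: "qu = au + c *\<^sub>R Hpv (blinfun_apply S1 (qu, bu, 0))"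
    and hqv: "qv = av + c *\<^sub>R Hpv (blinfun_apply S1 (qv, bv, 0))"
    and hPu: "Pu = bu - c *\<^sub>R Hqv (blinfun_apply S1 (qu, bu, 0)) - c *\<^sub>R Hqv (blinfun_apply S2 (qu, Pu, 0))"
    and hPv: "Pv = bv - c *\<^sub>R Hqv (blinfun_apply S1 (qv, bv, 0)) - c *\<^sub>R Hqv (blinfun_apply S2 (qv, Pv, 0))"
    and hQu: "Qu = qu + c *\<^sub>R Hpv (blinfun_apply S2 (qu, Pu, 0))"
    and hQv: "Qv = qv + c *\<^sub>R Hpv (blinfun_apply S2 (qv, Pv, 0))"
  shows "Pu \<bullet> Qv - Pv \<bullet> Qu = bu \<bullet> av - bv \<bullet> au"
proof -
  define Wu where "Wu = (qu, bu, 0::real)"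
  define Wv where "Wv = (qv, bv, 0::real)"
  define Vu where "Vu = (qu, Pu, 0::real)"
  define Vv where "Vv = (qv, Pv, 0::real)"
  note defs = Wu_def[symmetric] Wv_def[symmetric] Vu_def[symmetric] Vv_def[symmetric]
  have f1: "Pu \<bullet> Qv = Pu \<bullet> qv + c * blinfun_apply (blinfun_apply S2 Vv) (0, Pu, 0)"
    by (subst hQv) (simp add: inner_add_right inner_commute[of Pu] inner_Hpv Vv_def)
  have f2: "Pv \<bullet> Qu = Pv \<bullet> qu + c * blinfun_apply (blinfun_apply S2 Vu) (0, Pv, 0)"
    by (subst hQu) (simp add: inner_add_right inner_commute[of Pv] inner_Hpv Vu_def)
  have f3: "Pu \<bullet> qv = bu \<bullet> qv - c * blinfun_apply (blinfun_apply S1 Wu) (qv, 0, 0)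
             - c * blinfun_apply (blinfun_apply S2 Vu) (qv, 0, 0)"
    by (subst hPu) (simp add: inner_diff_left inner_Hqv Wu_def Vu_def)
  have f4: "Pv \<bullet> qu = bv \<bullet> qu - c * blinfun_apply (blinfun_apply S1 Wv) (qu, 0, 0)
             - c * blinfun_apply (blinfun_apply S2 Vv) (qu, 0, 0)"
    by (subst hPv) (simp add: inner_diff_left inner_Hqv Wv_def Vv_def)
  have f5: "bu \<bullet> qv = bu \<bullet> av + c * blinfun_apply (blinfun_apply S1 Wv) (0, bu, 0)"
    by (subst hqv) (simp add: inner_add_right inner_commute[of bu] inner_Hpv Wv_def)
  have f6: "bv \<bullet> qu = bv \<bullet> au + c * blinfun_apply (blinfun_apply S1 Wu) (0, bv, 0)"
    by (subst hqu) (simp add: inner_add_right inner_commute[of bv] inner_Hpv Wu_def)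
  have g1: "c * blinfun_apply (blinfun_apply S1 Wv) Wu = c * blinfun_apply (blinfun_apply S1 Wv) (qu, 0, 0)
      + c * blinfun_apply (blinfun_apply S1 Wv) (0, bu, 0)"
    unfolding Wu_def by (subst bl_split) (simp add: algebra_simps)
  have g2: "c * blinfun_apply (blinfun_apply S1 Wu) Wv = c * blinfun_apply (blinfun_apply S1 Wu) (qv, 0, 0)
      + c * blinfun_apply (blinfun_apply S1 Wu) (0, bv, 0)"
    unfolding Wv_def by (subst bl_split) (simp add: algebra_simps)
  have g3: "c * blinfun_apply (blinfun_apply S2 Vv) Vu = c * blinfun_apply (blinfun_apply S2 Vv) (qu, 0, 0)
      + c * blinfun_apply (blinfun_apply S2 Vv) (0, Pu, 0)"
    unfolding Vu_def by (subst bl_split) (simp add: algebra_simps)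
  have g4: "c * blinfun_apply (blinfun_apply S2 Vu) Vv = c * blinfun_apply (blinfun_apply S2 Vu) (qv, 0, 0)
      + c * blinfun_apply (blinfun_apply S2 Vu) (0, Pv, 0)"
    unfolding Vv_def by (subst bl_split) (simp add: algebra_simps)
  have s1: "c * blinfun_apply (blinfun_apply S1 Wv) Wu = c * blinfun_apply (blinfun_apply S1 Wu) Wv"
    using sym1 by simp
  have s2: "c * blinfun_apply (blinfun_apply S2 Vv) Vu = c * blinfun_apply (blinfun_apply S2 Vu) Vv"
    using sym2 by simp
  have cm: "bu \<bullet> av = bu \<bullet> av" "bv \<bullet> au = bv \<bullet> au" by simp_all
  show ?thesis using f1 f2 f3 f4 f5 f6 g1 g2 g3 g4 s1 s2 by linarith
qed

lemma HD:
  fixes H' :: "('n::finite E) \<Rightarrow> ('n E) \<Rightarrow>\<^sub>L real"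
  assumes d2: "\<And>x. (H' has_derivative blinfun_apply (H'' x)) (at x)"
    and A: "(A has_derivative A') (at z)" and B: "(B has_derivative B') (at z)"
  shows "((\<lambda>z. H' (A z, B z, t)) has_derivative (\<lambda>u. blinfun_apply (H'' (A z, B z, t)) (A' u, B' u, 0))) (at z)"
proof -
  have "((\<lambda>z. (A z, B z, t)) has_derivative (\<lambda>u. (A' u, B' u, 0))) (at z)"
    by (intro has_derivative_Pair A B has_derivative_const)
  from has_derivative_compose[OF this d2] show ?thesis .
qed

lemma omega2_inner: "omega2 u v = snd u \<bullet> fst v - snd v \<bullet> fst u"
  by (simp add: omega2_def inner_vec_def sum_subtractf)

lemma part1:
  fixes H :: "real^'n::finite \<Rightarrow> real^'n \<Rightarrow> real \<Rightarrow> real"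
    and H' :: "('n::finite E) \<Rightarrow> ('n E) \<Rightarrow>\<^sub>L real"
  assumes d1: "\<And>x. ((\<lambda>(q,p,t). H q p t) has_derivative blinfun_apply (H' x)) (at x)"
    and d2: "\<And>x. (H' has_derivative blinfun_apply (H'' x)) (at x)"
    and c2: "\<And>x. continuous (at x) H''"
    and U: "open U" and C1q: "C1_on U qf" and C1P: "C1_on U Pf"
    and eqs: "\<forall>z\<in>U. q_eq H h t0 a (fst z) (snd z) (qf z) \<and> P_eq H h t0 a (snd z) (qf z) (Pf z)"
  shows "canonical_on U (\<lambda>z. (Q_of H h t0 a (qf z) (Pf z), Pf z))"
proof -
  obtain qf' where qd: "\<And>x. x \<in> U \<Longrightarrow> (qf has_derivative blinfun_apply (qf' x)) (at x)"
    using C1q unfolding C1_on_def by blast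
  obtain Pf' where Pd: "\<And>x. x \<in> U \<Longrightarrow> (Pf has_derivative blinfun_apply (Pf' x)) (at x)"
    using C1P unfolding C1_on_def by blast
  have dHp: "dHp H = (\<lambda>q p t. Hpv (H' (q,p,t)))" by (intro ext dHp_eq d1)
  have dHq: "dHq H = (\<lambda>q p t. Hqv (H' (q,p,t)))" by (intro ext dHq_eq d1)
  define c where "c = h / 2"
  define t1 where "t1 = t0 + a * h"
  define t2 where "t2 = t0 + (1 - a) * h"
  have EQ1: "qf z - (fst z + c *\<^sub>R Hpv (H' (qf z, snd z, t1))) = 0" if "z \<in> U" for z
  proof -
    have "qf z = fst z + c *\<^sub>R Hpv (H' (qf z, snd z, t1))"
      using eqs that unfolding q_eq_def dHp c_def t1_def by auto
    then show ?thesis by (simp only: right_minus_eq)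
  qed
  have EQ2: "Pf z - (snd z - c *\<^sub>R Hqv (H' (qf z, snd z, t1)) - c *\<^sub>R Hqv (H' (qf z, Pf z, t2))) = 0"
    if "z \<in> U" for z
  proof -
    have "Pf z = snd z - c *\<^sub>R Hqv (H' (qf z, snd z, t1)) - c *\<^sub>R Hqv (H' (qf z, Pf z, t2))"
      using eqs that unfolding P_eq_def p_of_def dHq c_def t1_def t2_def by auto
    then show ?thesis by (simp only: right_minus_eq)
  qed
  have Phi: "(\<lambda>z. (Q_of H h t0 a (qf z) (Pf z), Pf z)) = (\<lambda>z. (qf z + c *\<^sub>R Hpv (H' (qf z, Pf z, t2)), Pf z))"
    unfolding Q_of_def dHp c_def t2_def by simp
  have sym: "blinfun_apply (blinfun_apply (H'' x) w) v = blinfun_apply (blinfun_apply (H'' x) v) w" for x w v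
    by (rule second_deriv_sym[OF d1 d2 c2])
  show ?thesis unfolding canonical_on_def Phi
  proof
    fix z assume z: "z \<in> U"
    define dq where "dq = blinfun_apply (qf' z)"
    define dP where "dP = blinfun_apply (Pf' z)"
    define S1 where "S1 = H'' (qf z, snd z, t1)"
    define S2 where "S2 = H'' (qf z, Pf z, t2)"
    have sym1: "\<And>w v. blinfun_apply (blinfun_apply S1 w) v = blinfun_apply (blinfun_apply S1 v) w"
      unfolding S1_def by (rule sym)
    have sym2: "\<And>w v. blinfun_apply (blinfun_apply S2 w) v = blinfun_apply (blinfun_apply S2 v) w"
      unfolding S2_def by (rule sym)
    have qz: "(qf has_derivative dq) (at z)" unfolding dq_def by (rule qd[OF z])
    have Pz: "(Pf has_derivative dP) (at z)" unfolding dP_def by (rule Pd[OF z])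
    have sndz: "(snd has_derivative snd) (at z)" by (rule has_derivative_snd[OF has_derivative_ident])
    have fstz: "(fst has_derivative fst) (at z)" by (rule has_derivative_fst[OF has_derivative_ident])
    have h1: "((\<lambda>z. H' (qf z, snd z, t1)) has_derivative (\<lambda>u. blinfun_apply S1 (dq u, snd u, 0))) (at z)"
      unfolding S1_def by (rule HD[OF d2 qz sndz])
    have h2: "((\<lambda>z. H' (qf z, Pf z, t2)) has_derivative (\<lambda>u. blinfun_apply S2 (dq u, dP u, 0))) (at z)"
      unfolding S2_def by (rule HD[OF d2 qz Pz])
    have p1: "((\<lambda>z. Hpv (H' (qf z, snd z, t1))) has_derivative (\<lambda>u. Hpv (blinfun_apply S1 (dq u, snd u, 0)))) (at z)"
      by (rule bounded_linear.has_derivative[OF bl_Hpv h1])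
    have q1: "((\<lambda>z. Hqv (H' (qf z, snd z, t1))) has_derivative (\<lambda>u. Hqv (blinfun_apply S1 (dq u, snd u, 0)))) (at z)"
      by (rule bounded_linear.has_derivative[OF bl_Hqv h1])
    have p2: "((\<lambda>z. Hpv (H' (qf z, Pf z, t2))) has_derivative (\<lambda>u. Hpv (blinfun_apply S2 (dq u, dP u, 0)))) (at z)"
      by (rule bounded_linear.has_derivative[OF bl_Hpv h2])
    have q2: "((\<lambda>z. Hqv (H' (qf z, Pf z, t2))) has_derivative (\<lambda>u. Hqv (blinfun_apply S2 (dq u, dP u, 0)))) (at z)"
      by (rule bounded_linear.has_derivative[OF bl_Hqv h2])
    have k1: "((\<lambda>z. qf z - (fst z + c *\<^sub>R Hpv (H' (qf z, snd z, t1)))) has_derivative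
        (\<lambda>u. dq u - (fst u + c *\<^sub>R Hpv (blinfun_apply S1 (dq u, snd u, 0))))) (at z)"
      by (intro has_derivative_diff has_derivative_add qz fstz has_derivative_scaleR_right p1)
    have k2: "((\<lambda>z. Pf z - (snd z - c *\<^sub>R Hqv (H' (qf z, snd z, t1)) - c *\<^sub>R Hqv (H' (qf z, Pf z, t2)))) has_derivative
        (\<lambda>u. dP u - (snd u - c *\<^sub>R Hqv (blinfun_apply S1 (dq u, snd u, 0)) - c *\<^sub>R Hqv (blinfun_apply S2 (dq u, dP u, 0))))) (at z)"
      by (intro has_derivative_diff has_derivative_add Pz sndz has_derivative_scaleR_right q1 q2)
    have k1z: "((\<lambda>_. 0) has_derivative (\<lambda>u. dq u - (fst u + c *\<^sub>R Hpv (blinfun_apply S1 (dq u, snd u, 0))))) (at z)"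
      by (rule has_derivative_transform_within_open[OF k1 U z]) (rule EQ1)
    have k2z: "((\<lambda>_. 0) has_derivative
        (\<lambda>u. dP u - (snd u - c *\<^sub>R Hqv (blinfun_apply S1 (dq u, snd u, 0)) - c *\<^sub>R Hqv (blinfun_apply S2 (dq u, dP u, 0))))) (at z)"
      by (rule has_derivative_transform_within_open[OF k2 U z]) (rule EQ2)
    have K1: "dq u = fst u + c *\<^sub>R Hpv (blinfun_apply S1 (dq u, snd u, 0))" for u
      using fun_cong[OF has_derivative_unique[OF k1z has_derivative_const], of u] by (simp only: right_minus_eq)
    have K2: "dP u = snd u - c *\<^sub>R Hqv (blinfun_apply S1 (dq u, snd u, 0)) - c *\<^sub>R Hqv (blinfun_apply S2 (dq u, dP u, 0))" for u
      using fun_cong[OF has_derivative_unique[OF k2z has_derivative_const], of u] by (simp only: right_minus_eq)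
    define D where "D u = (dq u + c *\<^sub>R Hpv (blinfun_apply S2 (dq u, dP u, 0)), dP u)" for u
    have DD: "((\<lambda>z. (qf z + c *\<^sub>R Hpv (H' (qf z, Pf z, t2)), Pf z)) has_derivative D) (at z)"
      unfolding D_def by (intro has_derivative_Pair has_derivative_add qz Pz has_derivative_scaleR_right p2)
    show "\<exists>D. ((\<lambda>z. (qf z + c *\<^sub>R Hpv (H' (qf z, Pf z, t2)), Pf z)) has_derivative D) (at z) \<and>
            (\<forall>u v. omega2 (D u) (D v) = omega2 u v)"
    proof (intro exI conjI allI)
      show "((\<lambda>z. (qf z + c *\<^sub>R Hpv (H' (qf z, Pf z, t2)), Pf z)) has_derivative D) (at z)" by (rule DD)
      fix u v
      show "omega2 (D u) (D v) = omega2 u v"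
        unfolding omega2_inner D_def fst_conv snd_conv
        by (rule symp_alg[OF sym1 sym2 K1 K1 K2 K2 refl refl])
    qed
  qed
qed

lemma nE: "norm ((a, b, s) :: ('n::finite) E) \<le> norm a + norm b + \<bar>s\<bar>"
proof -
  have "norm (a, b, s) \<le> norm a + norm (b, s)" by (rule norm_Pair_le)
  also have "norm (b, s) \<le> norm b + norm s" by (rule norm_Pair_le)
  finally show ?thesis by simp
qed

lemma nE0: "norm ((a, b, 0) :: ('n::finite) E) = norm (a, b)"
  by (simp add: norm_Pair)

lemma nE2: "norm ((a, b, s) :: ('n::finite) E) \<le> norm (a, b) + \<bar>s\<bar>"
proof -
  have "norm ((a, b, s) :: ('n::finite) E) = sqrt ((norm a)^2 + (norm b)^2 + s^2)"
    by (simp add: norm_Pair add.assoc)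
  also have "\<dots> = sqrt ((sqrt ((norm a)^2 + (norm b)^2))^2 + s^2)" by simp
  also have "\<dots> \<le> \<bar>sqrt ((norm a)^2 + (norm b)^2)\<bar> + \<bar>s\<bar>" by (rule sqrt_sum_squares_le_sum_abs)
  also have "sqrt ((norm a)^2 + (norm b)^2) = norm (a, b)" by (simp add: norm_Pair)
  finally show ?thesis by simp
qed

lemma cont_bound:
  fixes g :: "'a::metric_space \<Rightarrow> 'b::real_normed_vector"
  assumes "compact K" "continuous_on K g"
  obtains M where "M \<ge> 0" "\<And>x. x \<in> K \<Longrightarrow> norm (g x) \<le> M"
proof -
  have "bounded (g ` K)" by (intro compact_imp_bounded compact_continuous_image assms)
  then obtain M where "\<forall>y\<in>g ` K. norm y \<le> M" unfolding bounded_iff by blast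
  then show ?thesis using that[of "max M 0"] by force
qed

lemma lip_from_deriv:
  fixes G :: "'a::real_normed_vector \<Rightarrow> 'b::real_normed_vector"
  assumes "convex S" "\<And>y. y \<in> S \<Longrightarrow> (G has_derivative blinfun_apply (G' y)) (at y)"
    "\<And>y. y \<in> S \<Longrightarrow> norm (G' y) \<le> K" "x \<in> S" "y \<in> S"
  shows "norm (G x - G y) \<le> K * norm (x - y)"
  by (rule differentiable_bound[OF assms(1) _ _ assms(4,5)])
     (use assms(2,3) in \<open>auto intro: has_derivative_at_withinI simp: norm_blinfun.rep_eq[symmetric]\<close>)

lemma taylor2:
  fixes F :: "'a::euclidean_space \<Rightarrow> 'b::real_normed_vector"
  assumes "convex S" "x0 \<in> S" "y \<in> S"
    and d: "\<And>w. w \<in> S \<Longrightarrow> (F has_derivative F' w) (at w)"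
    and L: "\<And>w. w \<in> S \<Longrightarrow> onorm (F' w - F' x0) \<le> L2 * norm (w - x0)"
    and L2: "L2 \<ge> 0"
  shows "norm (F y - F x0 - F' x0 (y - x0)) \<le> L2 * (norm (y - x0))^2"
proof -
  have seg: "closed_segment x0 y \<subseteq> S" by (rule closed_segment_subset) (use assms in auto)
  have "norm (F y - F x0 - F' x0 (y - x0)) \<le> norm (y - x0) * (L2 * norm (y - x0))"
  proof (rule linearization_ball[where S="closed_segment x0 y"])
    show "(F has_derivative F' w) (at w)" if "w \<in> closed_segment x0 y" for w using d seg that by auto
    show "onorm (F' w - F' x0) \<le> L2 * norm (y - x0)" if w: "w \<in> closed_segment x0 y" for w
    proof -
      have "dist w x0 \<le> dist x0 y" using dist_in_closed_segment[OF w] by simp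
      then have "norm (w - x0) \<le> norm (y - x0)" by (simp add: dist_norm norm_minus_commute)
      then show ?thesis using L[of w] w seg L2 by (meson mult_left_mono order_trans subsetD)
    qed
  qed auto
  then show ?thesis by (simp add: power2_eq_square mult_ac)
qed

lemma alg1:
  fixes X1 X2 F0 A1 A2 V :: "'b::real_vector"
  assumes "c = h / 2"
  shows "c *\<^sub>R (X1 + X2) - (h *\<^sub>R F0 + (h^2/2) *\<^sub>R V)
       = c *\<^sub>R ((X1 - F0 - A1) + (X2 - F0 - A2) + (A1 + A2 - h *\<^sub>R V))"
proof -
  have hF: "h *\<^sub>R F0 = c *\<^sub>R F0 + c *\<^sub>R F0" using assms by (simp add: scaleR_add_left[symmetric])
  have hV: "(h^2/2) *\<^sub>R V = (c * h) *\<^sub>R V" using assms by (simp add: power2_eq_square)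
  have "c *\<^sub>R ((X1 - F0 - A1) + (X2 - F0 - A2) + (A1 + A2 - h *\<^sub>R V))
      = c *\<^sub>R (X1 + X2) - (c *\<^sub>R F0 + c *\<^sub>R F0) - (c * h) *\<^sub>R V"
    by (simp add: algebra_simps)
  then show ?thesis unfolding hF hV by (metis diff_diff_eq)
qed

lemma vdiff_quad:
  "((\<lambda>t. ((t - t0)^2/2) *\<^sub>R V) has_vector_derivative ((t - t0) *\<^sub>R V)) (at t within S)"
proof -
  have "((\<lambda>t. (t - t0)^2/2) has_field_derivative (t - t0)) (at t within S)"
    by (auto intro!: derivative_eq_intros simp: power2_eq_square)
  from has_vector_derivative_scaleR[OF this has_vector_derivative_const[of V]] show ?thesis by simp
qed

lemma part2:
  fixes H :: "real^'n::finite \<Rightarrow> real^'n \<Rightarrow> real \<Rightarrow> real"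
    and H' :: "('n E) \<Rightarrow> ('n E) \<Rightarrow>\<^sub>L real"
    and H'' :: "('n E) \<Rightarrow> ('n E) \<Rightarrow>\<^sub>L (('n E) \<Rightarrow>\<^sub>L real)"
    and H''' :: "('n E) \<Rightarrow> ('n E) \<Rightarrow>\<^sub>L (('n E) \<Rightarrow>\<^sub>L (('n E) \<Rightarrow>\<^sub>L real))"
  assumes d1: "\<And>x. ((\<lambda>(q,p,t). H q p t) has_derivative blinfun_apply (H' x)) (at x)"
    and d2: "\<And>x. (H' has_derivative blinfun_apply (H'' x)) (at x)"
    and d3: "\<And>x. (H'' has_derivative blinfun_apply (H''' x)) (at x)"
    and c3: "continuous_on UNIV H'''"
  shows "(\<forall>(\<alpha>::real^'n) (\<beta>::real^'n) (x :: real \<Rightarrow> (real^'n) \<times> (real^'n)) (\<epsilon>::real).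
       \<epsilon> > 0 \<and> x t0 = (\<alpha>, \<beta>) \<and>
       (\<forall>t\<in>ball t0 \<epsilon>. (x has_vector_derivative
           (dHp H (fst (x t)) (snd (x t)) t, - dHq H (fst (x t)) (snd (x t)) t)) (at t))
       \<longrightarrow> (\<exists>r>0. \<exists>\<delta>>0. \<exists>C. \<forall>h. 0 < h \<and> h < \<delta> \<longrightarrow>
              (\<exists>q P. dist q \<alpha> < r \<and> dist P \<beta> < r \<and>
                     q_eq H h t0 a \<alpha> \<beta> q \<and> P_eq H h t0 a \<beta> q P) \<and>
              (\<forall>q P. dist q \<alpha> < r \<and> dist P \<beta> < r \<and>
                     q_eq H h t0 a \<alpha> \<beta> q \<and> P_eq H h t0 a \<beta> q P \<longrightarrow>
                     norm (Q_of H h t0 a q P - fst (x (t0 + h))) \<le> C * h^3 \<and>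
                     norm (P - snd (x (t0 + h))) \<le> C * h^3)))"
proof (intro allI impI)
  fix \<alpha> \<beta> :: "real^'n" and x :: "real \<Rightarrow> (real^'n) \<times> (real^'n)" and \<epsilon> :: real
  assume asm: "\<epsilon> > 0 \<and> x t0 = (\<alpha>, \<beta>) \<and>
       (\<forall>t\<in>ball t0 \<epsilon>. (x has_vector_derivative
           (dHp H (fst (x t)) (snd (x t)) t, - dHq H (fst (x t)) (snd (x t)) t)) (at t))"
  then have \<epsilon>: "\<epsilon> > 0" and xt0: "x t0 = (\<alpha>, \<beta>)"
    and xd0: "\<And>t. t \<in> ball t0 \<epsilon> \<Longrightarrow> (x has_vector_derivative
           (dHp H (fst (x t)) (snd (x t)) t, - dHq H (fst (x t)) (snd (x t)) t)) (at t)" by auto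
  define \<Lambda> :: "('n E) \<Rightarrow>\<^sub>L real \<Rightarrow> (real^'n) \<times> (real^'n)" where "\<Lambda> A = (Hpv A, - Hqv A)" for A
  have blL: "bounded_linear \<Lambda>" unfolding \<Lambda>_def[abs_def]
    by (intro bounded_linear_Pair bl_Hpv bounded_linear_minus bl_Hqv)
  obtain nL where nL: "nL > 0" "\<And>A. norm (\<Lambda> A) \<le> norm A * nL"
    using bounded_linear.pos_bounded[OF blL] by blast
  define F where "F y = \<Lambda> (H' y)" for y
  define F' where "F' y = (\<lambda>w. \<Lambda> (blinfun_apply (H'' y) w))" for y
  have Fd: "(F has_derivative F' y) (at y)" for y
    unfolding F_def[abs_def] F'_def by (rule bounded_linear.has_derivative[OF blL d2])
  have Fcont: "continuous_on UNIV F"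
    using Fd by (meson has_derivative_continuous continuous_at_imp_continuous_on)
  have dHpF: "dHp H q p t = fst (F (q,p,t))" for q p t
    using dHp_eq[OF d1] by (simp add: F_def \<Lambda>_def)
  have dHqF: "dHq H q p t = - snd (F (q,p,t))" for q p t
    using dHq_eq[OF d1] by (simp add: F_def \<Lambda>_def)
  define z where "z t = (fst (x t), snd (x t), t)" for t
  define x0 :: "'n E" where "x0 = (\<alpha>, \<beta>, t0)"
  have xd: "(x has_vector_derivative F (z t)) (at t)" if "t \<in> ball t0 \<epsilon>" for t
    using xd0[OF that] by (simp add: dHpF dHqF z_def)
  have zt0: "z t0 = x0" by (simp add: z_def x0_def xt0)
  define e2 where "e2 = \<epsilon> / 2"
  have e2: "e2 > 0" using \<epsilon> by (simp add: e2_def)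
  have Iball: "{t0..t0+e2} \<subseteq> ball t0 \<epsilon>"
    using \<epsilon> by (auto simp: e2_def dist_real_def)
  have xcont: "continuous_on {t0..t0+e2} x"
    by (rule continuous_at_imp_continuous_on)
       (use Iball xd in \<open>blast intro: has_vector_derivative_continuous\<close>)
  have zcont: "continuous_on {t0..t0+e2} (\<lambda>t. z t - x0)" unfolding z_def
    by (intro continuous_intros xcont)
  obtain R0 where R0: "R0 \<ge> 0" "\<And>t. t \<in> {t0..t0+e2} \<Longrightarrow> norm (z t - x0) \<le> R0"
    using cont_bound[OF compact_Icc zcont] by blast
  define R where "R = R0 + 3 + \<bar>a\<bar> + \<bar>1 - a\<bar>"
  define B where "B = cball x0 R"
  have cB: "compact B" "convex B" by (simp_all add: B_def)
  have x0B: "x0 \<in> B" using R0 by (simp add: B_def R_def)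
  have H'c: "continuous_on B H'"
    using d2 by (meson has_derivative_continuous continuous_at_imp_continuous_on)
  have H''c: "continuous_on B H''"
    using d3 by (meson has_derivative_continuous continuous_at_imp_continuous_on)
  have H'''c: "continuous_on B H'''" using c3 by (rule continuous_on_subset) simp
  obtain K1 where K1: "K1 \<ge> 0" "\<And>y. y \<in> B \<Longrightarrow> norm (H' y) \<le> K1"
    using cont_bound[OF cB(1) H'c] by blast
  obtain K2 where K2: "K2 \<ge> 0" "\<And>y. y \<in> B \<Longrightarrow> norm (H'' y) \<le> K2"
    using cont_bound[OF cB(1) H''c] by blast
  obtain K3 where K3: "K3 \<ge> 0" "\<And>y. y \<in> B \<Longrightarrow> norm (H''' y) \<le> K3"
    using cont_bound[OF cB(1) H'''c] by blast
  have H'lip: "norm (H' y - H' w) \<le> K2 * norm (y - w)" if "y \<in> B" "w \<in> B" for y w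
    by (rule lip_from_deriv[OF cB(2) d2 K2(2) that])
  have H''lip: "norm (H'' y - H'' w) \<le> K3 * norm (y - w)" if "y \<in> B" "w \<in> B" for y w
    by (rule lip_from_deriv[OF cB(2) d3 K3(2) that])
  define M where "M = nL * K1"
  define Lf where "Lf = nL * K2"
  define L2 where "L2 = nL * K3"
  define N where "N = nL * K2"
  have M0: "M \<ge> 0" and Lf0: "Lf \<ge> 0" and L20: "L2 \<ge> 0" and N0: "N \<ge> 0"
    using nL K1 K2 K3 by (simp_all add: M_def Lf_def L2_def N_def)
  have FM: "norm (F y) \<le> M" if "y \<in> B" for y
  proof -
    have "norm (F y) \<le> norm (H' y) * nL" unfolding F_def by (rule nL(2))
    also have "\<dots> \<le> K1 * nL" using K1(2)[OF that] nL(1) by (simp add: mult_right_mono)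
    finally show ?thesis by (simp add: M_def mult.commute)
  qed
  have Flip: "norm (F y - F w) \<le> Lf * norm (y - w)" if "y \<in> B" "w \<in> B" for y w
  proof -
    have "F y - F w = \<Lambda> (H' y - H' w)" unfolding F_def by (simp add: linear_diff[OF bounded_linear.linear[OF blL]])
    then have "norm (F y - F w) \<le> norm (H' y - H' w) * nL" using nL(2) by simp
    also have "\<dots> \<le> K2 * norm (y - w) * nL" using H'lip[OF that] nL(1) by (simp add: mult_right_mono)
    finally show ?thesis by (simp add: Lf_def mult_ac)
  qed
  have F'lip: "onorm (F' y - F' x0) \<le> L2 * norm (y - x0)" if "y \<in> B" for y
  proof (rule onorm_le)
    fix w
    have "(F' y - F' x0) w = \<Lambda> (blinfun_apply (H'' y - H'' x0) w)"
      unfolding F'_def by (simp add: linear_diff[OF bounded_linear.linear[OF blL]] minus_blinfun.rep_eq)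
    then have "norm ((F' y - F' x0) w) \<le> norm (blinfun_apply (H'' y - H'' x0) w) * nL" using nL(2) by simp
    also have "\<dots> \<le> (norm (H'' y - H'' x0) * norm w) * nL" using nL(1) by (intro mult_right_mono norm_blinfun) simp
    also have "\<dots> \<le> (K3 * norm (y - x0) * norm w) * nL" using H''lip[OF that x0B] nL(1)
      by (intro mult_right_mono) simp_all
    finally show "norm ((F' y - F' x0) w) \<le> L2 * norm (y - x0) * norm w" by (simp add: L2_def mult_ac)
  qed
  have F'N: "norm (F' x0 w) \<le> N * norm w" for w
  proof -
    have "norm (F' x0 w) \<le> norm (blinfun_apply (H'' x0) w) * nL" unfolding F'_def by (rule nL(2))
    also have "\<dots> \<le> (norm (H'' x0) * norm w) * nL" using nL(1) by (intro mult_right_mono norm_blinfun) simp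
    also have "\<dots> \<le> (K2 * norm w) * nL" using K2(2)[OF x0B] nL(1)
      by (intro mult_right_mono) simp_all
    finally show ?thesis by (simp add: N_def mult_ac)
  qed
  have blF': "bounded_linear (F' x0)" by (rule has_derivative_bounded_linear[OF Fd])
  have TF: "norm (F y - F x0 - F' x0 (y - x0)) \<le> L2 * (norm (y - x0))^2" if "y \<in> B" for y
    by (rule taylor2[OF cB(2) x0B that Fd F'lip L20])
  define K1c where "K1c = 3 * M + 1"
  define K2c where "K2c = 2 * M + \<bar>a\<bar> + \<bar>1 - a\<bar>"
  define C where "C = L2 * K2c^2 + N * Lf * K2c + (L2 * K1c^2 + N * Lf * K1c)"
  define \<delta> where "\<delta> = min e2 (min 1 (1 / (2 * M + 1)))"
  have \<delta>0: "\<delta> > 0" using e2 M0 by (simp add: \<delta>_def)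
  have inB: "(q, P, t0 + s) \<in> B" if "norm (q - \<alpha>) \<le> 1" "norm (P - \<beta>) \<le> 1" "\<bar>s\<bar> \<le> \<bar>a\<bar> + \<bar>1 - a\<bar>" for q P s
  proof -
    have "norm ((q, P, t0 + s) - x0) = norm ((q - \<alpha>, P - \<beta>, s) :: 'n E)" by (simp add: x0_def)
    also have "\<dots> \<le> norm (q - \<alpha>) + norm (P - \<beta>) + \<bar>s\<bar>" by (rule nE)
    finally show ?thesis using that R0 by (simp add: B_def R_def dist_norm norm_minus_commute)
  qed
  have nfst: "norm (fst v) \<le> norm v" and nsnd: "norm (snd v) \<le> norm v" for v :: "(real^'n) \<times> (real^'n)"
    using norm_fst_le[of "fst v" "snd v"] norm_snd_le[of "snd v" "fst v"] by simp_all
  have main: "(\<exists>q P. dist q \<alpha> < 1 \<and> dist P \<beta> < 1 \<and>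
                     q_eq H h t0 a \<alpha> \<beta> q \<and> P_eq H h t0 a \<beta> q P) \<and>
              (\<forall>q P. dist q \<alpha> < 1 \<and> dist P \<beta> < 1 \<and>
                     q_eq H h t0 a \<alpha> \<beta> q \<and> P_eq H h t0 a \<beta> q P \<longrightarrow>
                     norm (Q_of H h t0 a q P - fst (x (t0 + h))) \<le> C * h^3 \<and>
                     norm (P - snd (x (t0 + h))) \<le> C * h^3)"
    if h0: "0 < h" and hd: "h < \<delta>" for h
  proof -
    define c where "c = h / 2"
    define t1 where "t1 = t0 + a * h"
    define t2 where "t2 = t0 + (1 - a) * h"
    have h1: "h < 1" and he: "h < e2" using hd by (simp_all add: \<delta>_def)
    have hM: "h * M \<le> 1/2"
    proof -
      have "h < 1 / (2 * M + 1)" using hd by (simp add: \<delta>_def)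
      then have "h * (2 * M + 1) < 1" using M0 by (simp add: field_simps)
      then show ?thesis using h0 by (simp add: algebra_simps)
    qed
    have c0: "c > 0" using h0 by (simp add: c_def)
    have cM: "c * M \<le> 1/4" using hM by (simp add: c_def mult.commute)
    have sa: "\<bar>a * h\<bar> \<le> \<bar>a\<bar> + \<bar>1 - a\<bar>"
    proof -
      have "\<bar>a * h\<bar> = \<bar>a\<bar> * h" using h0 by (simp add: abs_mult)
      also have "\<dots> \<le> \<bar>a\<bar>" using h1 h0 by (simp add: mult_left_le)
      finally show ?thesis by simp
    qed
    have sb: "\<bar>(1 - a) * h\<bar> \<le> \<bar>a\<bar> + \<bar>1 - a\<bar>"
    proof -
      have "\<bar>(1 - a) * h\<bar> = \<bar>1 - a\<bar> * h" using h0 by (simp add: abs_mult)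
      also have "\<dots> \<le> \<bar>1 - a\<bar>" using h1 h0 by (simp add: mult_left_le)
      finally show ?thesis by simp
    qed
    have in1: "(q, \<beta>, t1) \<in> B" if "norm (q - \<alpha>) \<le> 1" for q
      unfolding t1_def by (rule inB) (use that sa in auto)
    have in2: "(q, P, t2) \<in> B" if "norm (q - \<alpha>) \<le> 1" "norm (P - \<beta>) \<le> 1" for q P
      unfolding t2_def by (rule inB) (use that sb in auto)
    have qeq: "q_eq H h t0 a \<alpha> \<beta> q \<longleftrightarrow> q = \<alpha> + c *\<^sub>R fst (F (q, \<beta>, t1))" for q
      by (simp add: q_eq_def dHpF c_def t1_def)
    have Peq: "P_eq H h t0 a \<beta> q P \<longleftrightarrow> P = \<beta> + c *\<^sub>R snd (F (q, \<beta>, t1)) + c *\<^sub>R snd (F (q, P, t2))" for q P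
      by (simp add: P_eq_def p_of_def dHqF c_def t1_def t2_def)
    have Qeq: "Q_of H h t0 a q P = q + c *\<^sub>R fst (F (q, P, t2))" for q P
      by (simp add: Q_of_def dHpF c_def t2_def)
    show ?thesis
    proof
      define f1 where "f1 q = \<alpha> + c *\<^sub>R fst (F (q, \<beta>, t1))" for q
      have f1c: "continuous_on (cball \<alpha> (1/2)) f1" unfolding f1_def
        by (intro continuous_intros continuous_on_compose2[OF Fcont]) auto
      have f1m: "f1 \<in> cball \<alpha> (1/2) \<rightarrow> cball \<alpha> (1/2)"
      proof
        fix q assume q: "q \<in> cball \<alpha> (1/2)"
        then have "norm (q - \<alpha>) \<le> 1" by (simp add: dist_norm norm_minus_commute)
        then have "norm (F (q, \<beta>, t1)) \<le> M" using FM in1 by blast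
        then have "norm (c *\<^sub>R fst (F (q, \<beta>, t1))) \<le> c * M"
          using c0 nfst[of "F (q, \<beta>, t1)"] by (simp add: mult_left_mono)
        then show "f1 q \<in> cball \<alpha> (1/2)" using cM by (simp add: f1_def dist_norm)
      qed
      obtain q where q: "q \<in> cball \<alpha> (1/2)" "f1 q = q"
        using brouwer[OF compact_cball convex_cball _ f1c f1m] by auto
      have nq: "norm (q - \<alpha>) \<le> 1" using q(1) by (simp add: dist_norm norm_minus_commute)
      define p where "p = \<beta> + c *\<^sub>R snd (F (q, \<beta>, t1))"
      have np: "norm (p - \<beta>) \<le> c * M"
      proof -
        have "norm (F (q, \<beta>, t1)) \<le> M" using FM in1[OF nq] by blast
        then show ?thesis using c0 nsnd[of "F (q, \<beta>, t1)"] by (simp add: p_def mult_left_mono)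
      qed
      define f2 where "f2 P = p + c *\<^sub>R snd (F (q, P, t2))" for P
      have f2c: "continuous_on (cball \<beta> (1/2)) f2" unfolding f2_def
        by (intro continuous_intros continuous_on_compose2[OF Fcont]) auto
      have f2m: "f2 \<in> cball \<beta> (1/2) \<rightarrow> cball \<beta> (1/2)"
      proof
        fix P assume P: "P \<in> cball \<beta> (1/2)"
        then have "norm (P - \<beta>) \<le> 1" by (simp add: dist_norm norm_minus_commute)
        then have "norm (F (q, P, t2)) \<le> M" using FM in2[OF nq] by blast
        then have a1: "norm (c *\<^sub>R snd (F (q, P, t2))) \<le> c * M"
          using c0 nsnd[of "F (q, P, t2)"] by (simp add: mult_left_mono)
        have "norm (f2 P - \<beta>) \<le> norm (p - \<beta>) + norm (c *\<^sub>R snd (F (q, P, t2)))"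
          unfolding f2_def by (metis add_diff_eq diff_add_eq norm_triangle_ineq add.commute)
        then have "norm (f2 P - \<beta>) \<le> 1/2" using np a1 cM by linarith
        then show "f2 P \<in> cball \<beta> (1/2)" by (simp add: dist_norm norm_minus_commute)
      qed
      obtain P where P: "P \<in> cball \<beta> (1/2)" "f2 P = P"
        using brouwer[OF compact_cball convex_cball _ f2c f2m] by auto
      show "\<exists>q P. dist q \<alpha> < 1 \<and> dist P \<beta> < 1 \<and> q_eq H h t0 a \<alpha> \<beta> q \<and> P_eq H h t0 a \<beta> q P"
      proof (intro exI conjI)
        show "dist q \<alpha> < 1" using q(1) by (simp add: dist_commute)
        show "dist P \<beta> < 1" using P(1) by (simp add: dist_commute)
        show "q_eq H h t0 a \<alpha> \<beta> q" using q(2) by (simp add: qeq f1_def)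
        show "P_eq H h t0 a \<beta> q P" using P(2) by (simp add: Peq f2_def p_def)
      qed
    next
      show "\<forall>q P. dist q \<alpha> < 1 \<and> dist P \<beta> < 1 \<and>
                     q_eq H h t0 a \<alpha> \<beta> q \<and> P_eq H h t0 a \<beta> q P \<longrightarrow>
                     norm (Q_of H h t0 a q P - fst (x (t0 + h))) \<le> C * h^3 \<and>
                     norm (P - snd (x (t0 + h))) \<le> C * h^3"
      proof (intro allI impI, elim conjE)
        fix q P assume dq: "dist q \<alpha> < 1" and dP: "dist P \<beta> < 1"
          and qe: "q_eq H h t0 a \<alpha> \<beta> q" and Pe: "P_eq H h t0 a \<beta> q P"
        have nq1: "norm (q - \<alpha>) \<le> 1" and nP1: "norm (P - \<beta>) \<le> 1"
          using dq dP by (simp_all add: dist_norm)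
        define x1 where "x1 = (q, \<beta>, t1)"
        define x2 where "x2 = (q, P, t2)"
        have x1B: "x1 \<in> B" unfolding x1_def by (rule in1[OF nq1])
        have x2B: "x2 \<in> B" unfolding x2_def by (rule in2[OF nq1 nP1])
        have hq: "q - \<alpha> = c *\<^sub>R fst (F x1)" using qe by (simp add: qeq x1_def algebra_simps)
        have hP: "P - \<beta> = c *\<^sub>R snd (F x1) + c *\<^sub>R snd (F x2)" using Pe by (simp add: Peq x1_def x2_def algebra_simps)
        define Q where "Q = Q_of H h t0 a q P"
        have hQ: "Q = q + c *\<^sub>R fst (F x2)" by (simp add: Q_def Qeq x2_def)
        have FM1: "norm (F x1) \<le> M" and FM2: "norm (F x2) \<le> M" using FM x1B x2B by auto
        have nq: "norm (q - \<alpha>) \<le> c * M"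
          unfolding hq using c0 nfst[of "F x1"] FM1 by (simp add: mult_left_mono order_trans)
        have nP: "norm (P - \<beta>) \<le> h * M"
        proof -
          have "norm (P - \<beta>) \<le> norm (c *\<^sub>R snd (F x1)) + norm (c *\<^sub>R snd (F x2))"
            unfolding hP by (rule norm_triangle_ineq)
          also have "\<dots> \<le> c * M + c * M"
            using c0 nsnd[of "F x1"] nsnd[of "F x2"] FM1 FM2
            by (intro add_mono) (simp_all add: mult_left_mono order_trans)
          finally show ?thesis by (simp add: c_def mult.commute)
        qed
        have nx1: "norm (x1 - x0) \<le> K2c * h"
        proof -
          have "norm (x1 - x0) = norm ((q - \<alpha>, 0, a * h) :: 'n E)" by (simp add: x1_def x0_def t1_def)
          also have "\<dots> \<le> norm (q - \<alpha>) + norm (0::real^'n) + \<bar>a * h\<bar>" by (rule nE)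
          also have "\<dots> \<le> c * M + 0 + \<bar>a\<bar> * h" using nq h0 by (simp add: abs_mult)
          also have "\<dots> \<le> K2c * h" using h0 M0 by (simp add: K2c_def c_def algebra_simps)
          finally show ?thesis .
        qed
        have nx2: "norm (x2 - x0) \<le> K2c * h"
        proof -
          have "norm (x2 - x0) = norm ((q - \<alpha>, P - \<beta>, (1 - a) * h) :: 'n E)" by (simp add: x2_def x0_def t2_def)
          also have "\<dots> \<le> norm (q - \<alpha>) + norm (P - \<beta>) + \<bar>(1 - a) * h\<bar>" by (rule nE)
          also have "\<dots> \<le> c * M + h * M + \<bar>1 - a\<bar> * h" using nq nP h0 by (simp add: abs_mult)
          also have "\<dots> \<le> K2c * h" using h0 M0 by (simp add: K2c_def c_def algebra_simps)
          finally show ?thesis .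
        qed
        define w0 :: "'n E" where "w0 = (fst (F x0), snd (F x0), 1)"
        define V where "V = F' x0 w0"
        define T where "T = h *\<^sub>R F x0 + (h^2/2) *\<^sub>R V"
        define d where "d = (x1 - x0) + (x2 - x0) - h *\<^sub>R w0"
        have dform: "d = (h *\<^sub>R (fst (F x1) - fst (F x0)),
                         c *\<^sub>R (snd (F x1) - snd (F x0)) + c *\<^sub>R (snd (F x2) - snd (F x0)), 0)"
        proof -
          have "fst d = (q - \<alpha>) + (q - \<alpha>) - h *\<^sub>R fst (F x0)"
            by (simp add: d_def x1_def x2_def x0_def w0_def)
          also have "\<dots> = h *\<^sub>R (fst (F x1) - fst (F x0))"
            unfolding hq c_def by (simp add: algebra_simps scaleR_add_left[symmetric])
          finally have 1: "fst d = h *\<^sub>R (fst (F x1) - fst (F x0))" .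
          have "fst (snd d) = (P - \<beta>) - h *\<^sub>R snd (F x0)"
            by (simp add: d_def x1_def x2_def x0_def w0_def)
          also have "\<dots> = c *\<^sub>R (snd (F x1) - snd (F x0)) + c *\<^sub>R (snd (F x2) - snd (F x0))"
            unfolding hP c_def by (simp add: algebra_simps scaleR_add_left[symmetric])
          finally have 2: "fst (snd d) = c *\<^sub>R (snd (F x1) - snd (F x0)) + c *\<^sub>R (snd (F x2) - snd (F x0))" .
          have 3: "snd (snd d) = 0"
            by (simp add: d_def x1_def x2_def x0_def w0_def t1_def t2_def algebra_simps)
          show ?thesis using 1 2 3 by (metis prod.collapse)
        qed
        have nd: "norm d \<le> 2 * Lf * K2c * h^2"
        proof -
          have l1: "norm (F x1 - F x0) \<le> Lf * (K2c * h)"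
            using Flip[OF x1B x0B] nx1 Lf0 by (meson mult_left_mono order_trans)
          have l2: "norm (F x2 - F x0) \<le> Lf * (K2c * h)"
            using Flip[OF x2B x0B] nx2 Lf0 by (meson mult_left_mono order_trans)
          have "norm d = norm (h *\<^sub>R (fst (F x1) - fst (F x0)),
                         c *\<^sub>R (snd (F x1) - snd (F x0)) + c *\<^sub>R (snd (F x2) - snd (F x0)))"
            unfolding dform by (rule nE0)
          also have "\<dots> \<le> norm (h *\<^sub>R (fst (F x1) - fst (F x0)))
                       + norm (c *\<^sub>R (snd (F x1) - snd (F x0)) + c *\<^sub>R (snd (F x2) - snd (F x0)))"
            by (rule norm_Pair_le)
          also have "\<dots> \<le> h * norm (F x1 - F x0) + (c * norm (F x1 - F x0) + c * norm (F x2 - F x0))"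
          proof (intro add_mono)
            show "norm (h *\<^sub>R (fst (F x1) - fst (F x0))) \<le> h * norm (F x1 - F x0)"
              using h0 nfst[of "F x1 - F x0"] by (simp add: mult_left_mono)
            have "norm (c *\<^sub>R (snd (F x1) - snd (F x0)) + c *\<^sub>R (snd (F x2) - snd (F x0)))
                \<le> norm (c *\<^sub>R (snd (F x1) - snd (F x0))) + norm (c *\<^sub>R (snd (F x2) - snd (F x0)))"
              by (rule norm_triangle_ineq)
            also have "\<dots> \<le> c * norm (F x1 - F x0) + c * norm (F x2 - F x0)"
              using c0 nsnd[of "F x1 - F x0"] nsnd[of "F x2 - F x0"]
              by (intro add_mono) (simp_all add: mult_left_mono)
            finally show "norm (c *\<^sub>R (snd (F x1) - snd (F x0)) + c *\<^sub>R (snd (F x2) - snd (F x0)))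
                \<le> c * norm (F x1 - F x0) + c * norm (F x2 - F x0)" .
          qed
          also have "\<dots> \<le> h * (Lf * (K2c * h)) + (c * (Lf * (K2c * h)) + c * (Lf * (K2c * h)))"
            using h0 c0 l1 l2 by (intro add_mono mult_left_mono) simp_all
          also have "\<dots> = 2 * Lf * K2c * h^2" by (simp add: c_def power2_eq_square algebra_simps)
          finally show ?thesis .
        qed
        have Sv: "(Q, P) - (\<alpha>, \<beta>) = c *\<^sub>R (F x1 + F x2)"
          using hq hP hQ by (simp add: prod_eq_iff algebra_simps)
        have lin: "F' x0 d = F' x0 (x1 - x0) + F' x0 (x2 - x0) - h *\<^sub>R V"
          unfolding d_def V_def using blF'
          by (simp add: linear_diff linear_add linear_scale bounded_linear.linear)
        have SE: "norm ((Q, P) - (\<alpha>, \<beta>) - T) \<le> (L2 * K2c^2 + N * Lf * K2c) * h^3"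
        proof -
          have "(Q, P) - (\<alpha>, \<beta>) - T = c *\<^sub>R ((F x1 - F x0 - F' x0 (x1 - x0)) + (F x2 - F x0 - F' x0 (x2 - x0)) + F' x0 d)"
            unfolding Sv T_def lin by (rule alg1) (simp add: c_def)
          then have "norm ((Q, P) - (\<alpha>, \<beta>) - T) = c * norm ((F x1 - F x0 - F' x0 (x1 - x0)) + (F x2 - F x0 - F' x0 (x2 - x0)) + F' x0 d)"
            using c0 by simp
          also have "\<dots> \<le> c * (L2 * (K2c * h)^2 + L2 * (K2c * h)^2 + N * (2 * Lf * K2c * h^2))"
          proof (intro mult_left_mono)
            have t1: "norm (F x1 - F x0 - F' x0 (x1 - x0)) \<le> L2 * (K2c * h)^2"
              using TF[OF x1B] nx1 L20 by (meson norm_ge_zero order_trans power_mono mult_left_mono)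
            have t2: "norm (F x2 - F x0 - F' x0 (x2 - x0)) \<le> L2 * (K2c * h)^2"
              using TF[OF x2B] nx2 L20 by (meson norm_ge_zero order_trans power_mono mult_left_mono)
            have t3: "norm (F' x0 d) \<le> N * (2 * Lf * K2c * h^2)"
              using F'N[of d] nd N0 by (meson order_trans mult_left_mono)
            show "norm ((F x1 - F x0 - F' x0 (x1 - x0)) + (F x2 - F x0 - F' x0 (x2 - x0)) + F' x0 d)
                \<le> L2 * (K2c * h)^2 + L2 * (K2c * h)^2 + N * (2 * Lf * K2c * h^2)"
              using t1 t2 t3 norm_triangle_ineq[of "(F x1 - F x0 - F' x0 (x1 - x0)) + (F x2 - F x0 - F' x0 (x2 - x0))" "F' x0 d"]
                norm_triangle_ineq[of "F x1 - F x0 - F' x0 (x1 - x0)" "F x2 - F x0 - F' x0 (x2 - x0)"]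
              by linarith
          qed (use c0 in simp)
          also have "\<dots> = (L2 * K2c^2 + N * Lf * K2c) * h^3"
            by (simp add: c_def power2_eq_square power3_eq_cube algebra_simps)
          finally show ?thesis .
        qed
        have EX: "norm (x (t0 + h) - (\<alpha>, \<beta>) - T) \<le> (L2 * K1c^2 + N * Lf * K1c) * h^3"
        proof -
          define Ih where "Ih = {t0..t0+h}"
          have IhI: "Ih \<subseteq> {t0..t0+e2}" using he by (auto simp: Ih_def)
          have t0I: "t0 \<in> Ih" using h0 by (simp add: Ih_def)
          have t1I: "t0 + h \<in> Ih" using h0 by (simp add: Ih_def)
          have zB: "z t \<in> B" if "t \<in> Ih" for t
          proof -
            have "norm (z t - x0) \<le> R0" using R0(2) IhI that by blast
            then show ?thesis by (simp add: B_def R_def dist_norm norm_minus_commute)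
          qed
          have xdw: "(x has_vector_derivative F (z t)) (at t within Ih)" if "t \<in> Ih" for t
            by (rule has_vector_derivative_at_within[OF xd]) (use that IhI Iball in blast)
          have seg: "closed_segment t0 t \<subseteq> Ih" if "t \<in> Ih" for t
            using that by (auto simp: closed_segment_eq_real_ivl Ih_def)
          have Fx0: "norm (F x0) \<le> M" using FM[OF x0B] .
          have E1: "norm (x t - x t0 - (t - t0) *\<^sub>R F x0) \<le> norm (t - t0) * (2 * M)" if t: "t \<in> Ih" for t
          proof -
            have "norm (x t - x t0 - (t - t0) *\<^sub>R F (z t0)) \<le> norm (t - t0) * (2 * M)"
            proof (rule vector_differentiable_bound_linearization[where S=Ih and f'="\<lambda>s. F (z s)"])
              show "norm (F (z s) - F (z t0)) \<le> 2 * M" if "s \<in> Ih" for s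
                using FM[OF zB[OF that]] FM[OF zB[OF t0I]] norm_triangle_ineq4[of "F (z s)" "F (z t0)"] by linarith
            qed (use xdw seg[OF t] t0I in auto)
            then show ?thesis by (simp add: zt0)
          qed
          have nz: "norm (z t - x0) \<le> K1c * h" if t: "t \<in> Ih" for t
          proof -
            have tt: "0 \<le> t - t0" "t - t0 \<le> h" using t by (auto simp: Ih_def)
            have "z t - x0 = (fst (x t - x t0), snd (x t - x t0), t - t0)" by (simp add: z_def x0_def xt0)
            then have "norm (z t - x0) \<le> norm (fst (x t - x t0), snd (x t - x t0)) + \<bar>t - t0\<bar>"
              using nE2 by metis
            also have "\<dots> = norm (x t - x t0) + (t - t0)" by (simp only: prod.collapse abs_of_nonneg[OF tt(1)])
            also have "norm (x t - x t0) \<le> norm (x t - x t0 - (t - t0) *\<^sub>R F x0) + norm ((t - t0) *\<^sub>R F x0)"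
              using norm_triangle_ineq[of "x t - x t0 - (t - t0) *\<^sub>R F x0" "(t - t0) *\<^sub>R F x0"] by simp
            also have "\<dots> \<le> (t - t0) * (2 * M) + (t - t0) * M"
              using E1[OF t] tt Fx0 by (intro add_mono) (simp_all add: mult_left_mono)
            finally have "norm (z t - x0) \<le> K1c * (t - t0)" by (simp add: K1c_def algebra_simps)
            also have "\<dots> \<le> K1c * h" using tt M0 by (simp add: K1c_def mult_left_mono)
            finally show ?thesis .
          qed
          have E2: "norm (x t - x t0 - (t - t0) *\<^sub>R F x0) \<le> Lf * K1c * h^2" if t: "t \<in> Ih" for t
          proof -
            have tt: "0 \<le> t - t0" "t - t0 \<le> h" using t by (auto simp: Ih_def)
            have "norm (x t - x t0 - (t - t0) *\<^sub>R F (z t0)) \<le> norm (t - t0) * (Lf * (K1c * h))"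
            proof (rule vector_differentiable_bound_linearization[where S=Ih and f'="\<lambda>s. F (z s)"])
              show "norm (F (z s) - F (z t0)) \<le> Lf * (K1c * h)" if "s \<in> Ih" for s
                using Flip[OF zB[OF that] x0B] nz[OF that] Lf0 unfolding zt0
                by (meson mult_left_mono order_trans)
            qed (use xdw seg[OF t] t0I in auto)
            also have "\<dots> \<le> h * (Lf * (K1c * h))"
              using tt Lf0 M0 by (intro mult_right_mono) (simp_all add: K1c_def)
            finally show ?thesis by (simp add: zt0 power2_eq_square mult_ac)
          qed
          define \<phi> where "\<phi> t = x t - ((t - t0)^2/2) *\<^sub>R V" for t
          have \<phi>d: "(\<phi> has_vector_derivative (F (z t) - (t - t0) *\<^sub>R V)) (at t within Ih)" if "t \<in> Ih" for t
            unfolding \<phi>_def[abs_def] by (intro has_vector_derivative_diff xdw[OF that] vdiff_quad)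
          have B3: "norm ((F (z s) - (s - t0) *\<^sub>R V) - (F (z t0) - (t0 - t0) *\<^sub>R V))
                      \<le> L2 * (K1c * h)^2 + N * (Lf * K1c * h^2)" if s: "s \<in> Ih" for s
          proof -
            have lv: "F' x0 (z s - x0 - (s - t0) *\<^sub>R w0) = F' x0 (z s - x0) - (s - t0) *\<^sub>R V"
              unfolding V_def using blF' by (simp add: linear_diff linear_scale bounded_linear.linear)
            have eq: "(F (z s) - (s - t0) *\<^sub>R V) - (F (z t0) - (t0 - t0) *\<^sub>R V)
                = (F (z s) - F x0 - F' x0 (z s - x0)) + F' x0 (z s - x0 - (s - t0) *\<^sub>R w0)"
              unfolding lv zt0 by simp
            have zw: "z s - x0 - (s - t0) *\<^sub>R w0 = (fst (x s - x t0 - (s - t0) *\<^sub>R F x0), snd (x s - x t0 - (s - t0) *\<^sub>R F x0), 0)"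
              by (simp add: z_def x0_def w0_def xt0)
            have n1: "norm (z s - x0 - (s - t0) *\<^sub>R w0) \<le> Lf * K1c * h^2"
              unfolding zw nE0 prod.collapse using E2[OF s] .
            have a1: "norm (F (z s) - F x0 - F' x0 (z s - x0)) \<le> L2 * (K1c * h)^2"
              using TF[OF zB[OF s]] nz[OF s] L20 by (meson norm_ge_zero order_trans power_mono mult_left_mono)
            have a2: "norm (F' x0 (z s - x0 - (s - t0) *\<^sub>R w0)) \<le> N * (Lf * K1c * h^2)"
              using F'N[of "z s - x0 - (s - t0) *\<^sub>R w0"] n1 N0 by (meson order_trans mult_left_mono)
            show ?thesis unfolding eq using a1 a2 norm_triangle_ineq[of "F (z s) - F x0 - F' x0 (z s - x0)" "F' x0 (z s - x0 - (s - t0) *\<^sub>R w0)"]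
              by linarith
          qed
          have "norm (\<phi> (t0 + h) - \<phi> t0 - ((t0 + h) - t0) *\<^sub>R (F (z t0) - (t0 - t0) *\<^sub>R V))
                 \<le> norm ((t0 + h) - t0) * (L2 * (K1c * h)^2 + N * (Lf * K1c * h^2))"
            by (rule vector_differentiable_bound_linearization[where S=Ih and f'="\<lambda>s. F (z s) - (s - t0) *\<^sub>R V"])
               (use \<phi>d seg[OF t1I] t0I B3 in auto)
          moreover have "\<phi> (t0 + h) - \<phi> t0 - ((t0 + h) - t0) *\<^sub>R (F (z t0) - (t0 - t0) *\<^sub>R V) = x (t0 + h) - (\<alpha>, \<beta>) - T"
            by (simp add: \<phi>_def T_def zt0 xt0 algebra_simps)
          moreover have "norm ((t0 + h) - t0) * (L2 * (K1c * h)^2 + N * (Lf * K1c * h^2)) = (L2 * K1c^2 + N * Lf * K1c) * h^3"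
            using h0 by (simp add: power2_eq_square power3_eq_cube algebra_simps)
          ultimately show ?thesis by simp
        qed
        have "norm ((Q, P) - x (t0 + h)) \<le> C * h^3"
        proof -
          have "(Q, P) - x (t0 + h) = ((Q, P) - (\<alpha>, \<beta>) - T) - (x (t0 + h) - (\<alpha>, \<beta>) - T)" by simp
          then have "norm ((Q, P) - x (t0 + h)) \<le> norm ((Q, P) - (\<alpha>, \<beta>) - T) + norm (x (t0 + h) - (\<alpha>, \<beta>) - T)"
            by (metis norm_triangle_ineq4)
          also have "\<dots> \<le> C * h^3" using SE EX by (simp add: C_def algebra_simps)
          finally show ?thesis .
        qed
        then show "norm (Q_of H h t0 a q P - fst (x (t0 + h))) \<le> C * h ^ 3 \<and> norm (P - snd (x (t0 + h))) \<le> C * h ^ 3"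
          using nfst[of "(Q, P) - x (t0 + h)"] nsnd[of "(Q, P) - x (t0 + h)"] by (simp add: Q_def)
      qed
    qed
  qed
  have A: "\<forall>h. 0 < h \<and> h < \<delta> \<longrightarrow> (\<exists>q P. dist q \<alpha> < 1 \<and> dist P \<beta> < 1 \<and>
                     q_eq H h t0 a \<alpha> \<beta> q \<and> P_eq H h t0 a \<beta> q P) \<and>
              (\<forall>q P. dist q \<alpha> < 1 \<and> dist P \<beta> < 1 \<and>
                     q_eq H h t0 a \<alpha> \<beta> q \<and> P_eq H h t0 a \<beta> q P \<longrightarrow>
                     norm (Q_of H h t0 a q P - fst (x (t0 + h))) \<le> C * h^3 \<and>
                     norm (P - snd (x (t0 + h))) \<le> C * h^3)"
    by (intro allI impI, erule conjE, rule main)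
  show "\<exists>r>0. \<exists>\<delta>>0. \<exists>C. \<forall>h. 0 < h \<and> h < \<delta> \<longrightarrow>
              (\<exists>q P. dist q \<alpha> < r \<and> dist P \<beta> < r \<and>
                     q_eq H h t0 a \<alpha> \<beta> q \<and> P_eq H h t0 a \<beta> q P) \<and>
              (\<forall>q P. dist q \<alpha> < r \<and> dist P \<beta> < r \<and>
                     q_eq H h t0 a \<alpha> \<beta> q \<and> P_eq H h t0 a \<beta> q P \<longrightarrow>
                     norm (Q_of H h t0 a q P - fst (x (t0 + h))) \<le> C * h^3 \<and>
                     norm (P - snd (x (t0 + h))) \<le> C * h^3)"
    by (rule exI[of _ 1], intro conjI, simp, rule exI[of _ \<delta>], intro conjI \<delta>0, rule exI[of _ C], rule A)
qed

theorem mainTheorem11: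
  fixes H :: "real^'n \<Rightarrow> real^'n \<Rightarrow> real \<Rightarrow> real" and t0 a :: real
  assumes "C3_on UNIV (\<lambda>(q, p, t). H q p t)"
  shows
   "(\<forall>(h::real) (U :: ((real^'n) \<times> (real^'n)) set) (qf :: (real^'n) \<times> (real^'n) \<Rightarrow> real^'n) Pf.
       h > 0 \<and> open U \<and> C1_on U qf \<and> C1_on U Pf \<and>
       (\<forall>z\<in>U. q_eq H h t0 a (fst z) (snd z) (qf z) \<and> P_eq H h t0 a (snd z) (qf z) (Pf z))
       \<longrightarrow> canonical_on U (\<lambda>z. (Q_of H h t0 a (qf z) (Pf z), Pf z)))
    \<and>
    (\<forall>(\<alpha>::real^'n) (\<beta>::real^'n) (x :: real \<Rightarrow> (real^'n) \<times> (real^'n)) (\<epsilon>::real).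
       \<epsilon> > 0 \<and> x t0 = (\<alpha>, \<beta>) \<and>
       (\<forall>t\<in>ball t0 \<epsilon>. (x has_vector_derivative
           (dHp H (fst (x t)) (snd (x t)) t, - dHq H (fst (x t)) (snd (x t)) t)) (at t))
       \<longrightarrow> (\<exists>r>0. \<exists>\<delta>>0. \<exists>C. \<forall>h. 0 < h \<and> h < \<delta> \<longrightarrow>
              (\<exists>q P. dist q \<alpha> < r \<and> dist P \<beta> < r \<and>
                     q_eq H h t0 a \<alpha> \<beta> q \<and> P_eq H h t0 a \<beta> q P) \<and>
              (\<forall>q P. dist q \<alpha> < r \<and> dist P \<beta> < r \<and>
                     q_eq H h t0 a \<alpha> \<beta> q \<and> P_eq H h t0 a \<beta> q P \<longrightarrow>
                     norm (Q_of H h t0 a q P - fst (x (t0 + h))) \<le> C * h^3 \<and>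
                     norm (P - snd (x (t0 + h))) \<le> C * h^3)))"
proof -
  obtain H' :: "('n E) \<Rightarrow> ('n E) \<Rightarrow>\<^sub>L real" where
    d1: "\<And>x. ((\<lambda>(q, p, t). H q p t) has_derivative blinfun_apply (H' x)) (at x)" and c2: "C2_on UNIV H'"
    using assms unfolding C3_on_def by blast
  obtain H'' where d2: "\<And>x. (H' has_derivative blinfun_apply (H'' x)) (at x)" and c1: "C1_on UNIV H''"
    using c2 unfolding C2_on_def by blast
  obtain H''' where d3: "\<And>x. (H'' has_derivative blinfun_apply (H''' x)) (at x)" and c3: "continuous_on UNIV H'''"
    using c1 unfolding C1_on_def by blast
  have c2': "\<And>x. continuous (at x) H''" using d3 by (rule has_derivative_continuous)
  show ?thesis
  proof (rule conjI)
    show "\<forall>(h::real) (U :: ((real^'n) \<times> (real^'n)) set) (qf :: (real^'n) \<times> (real^'n) \<Rightarrow> real^'n) Pf.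
       h > 0 \<and> open U \<and> C1_on U qf \<and> C1_on U Pf \<and>
       (\<forall>z\<in>U. q_eq H h t0 a (fst z) (snd z) (qf z) \<and> P_eq H h t0 a (snd z) (qf z) (Pf z))
       \<longrightarrow> canonical_on U (\<lambda>z. (Q_of H h t0 a (qf z) (Pf z), Pf z))"
      using part1[OF d1 d2 c2'] by blast
    show "\<forall>(\<alpha>::real^'n) (\<beta>::real^'n) (x :: real \<Rightarrow> (real^'n) \<times> (real^'n)) (\<epsilon>::real).
       \<epsilon> > 0 \<and> x t0 = (\<alpha>, \<beta>) \<and>
       (\<forall>t\<in>ball t0 \<epsilon>. (x has_vector_derivative
           (dHp H (fst (x t)) (snd (x t)) t, - dHq H (fst (x t)) (snd (x t)) t)) (at t))
       \<longrightarrow> (\<exists>r>0. \<exists>\<delta>>0. \<exists>C. \<forall>h. 0 < h \<and> h < \<delta> \<longrightarrow>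
              (\<exists>q P. dist q \<alpha> < r \<and> dist P \<beta> < r \<and>
                     q_eq H h t0 a \<alpha> \<beta> q \<and> P_eq H h t0 a \<beta> q P) \<and>
              (\<forall>q P. dist q \<alpha> < r \<and> dist P \<beta> < r \<and>
                     q_eq H h t0 a \<alpha> \<beta> q \<and> P_eq H h t0 a \<beta> q P \<longrightarrow>
                     norm (Q_of H h t0 a q P - fst (x (t0 + h))) \<le> C * h^3 \<and>
                     norm (P - snd (x (t0 + h))) \<le> C * h^3))"
      by (rule part2[OF d1 d2 d3 c3])
  qed
qed
end
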